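(* Let $q:\mathsf D\to\mathbb R$ have sensitivity $\Delta q\in(0,\infty)$, and let $\mu\in\mathbb R$, $\sigma>0$, $0\le a<b\le\infty$. If $\Lambda$ has the Gaussian $\mathcal N(\mu,\sigma^2)$ distribution truncated to $[a,b]$, then the Randomized DP Laplace mechanism with reciprocal scale $\Lambda$ satisfies $\epsilon_{N^T}$-differential privacy, where $$\epsilon_{N^T}=\ln\left[\frac{\mu+\dfrac{\sigma(\phi(\alpha)-\phi(\beta))}{\Phi(\beta)-\Phi(\alpha)}}{M'_{\Lambda}(-\Delta q)}\right],\qquad \alpha=\frac{a-\mu}{\sigma},\ \beta=\frac{b-\mu}{\sigma},$$ $\phi$ and $\Phi$ being the standard normal density and distribution function, and $M'_\Lambda(-\Delta q)=\frac{dM_\Lambda(t)}{dt}\big|_{t=-\Delta q}$.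
   Context: Databases form a set $\mathsf D$ with a symmetric adjacency relation; the sensitivity of $q$ is $\Delta q=\sup\{|q(d)-q(d')|:d,d'\text{ adjacent}\}$. A mechanism $M$ is $\epsilon$-DP if $\mathbb P(M(d)\in S)\le e^\epsilon\mathbb P(M(d')\in S)$ for all adjacent $d,d'$ and Borel $S$. The truncated Gaussian on $[a,b]$ has density $\frac{\phi((x-\mu)/\sigma)}{\sigma(\Phi(\beta)-\Phi(\alpha))}$ for $a\le x\le b$ and $0$ otherwise. The Randomized DP Laplace mechanism with reciprocal-scale distribution $\Lambda$ (a random variable with values in $[0,\infty)$, positive a.s., playing the role of $1/b$ for the Laplace scale) is defined by $\mathcal M_q(d)=q(d)+W$, where conditionally on $\Lambda=\lambda$ the noise $W$ is Laplace with mean $0$ and scale $1/\lambda$, i.e. has density $\frac{\lambda}{2}e^{-\lambda|w|}$; the pair $(\Lambda,W)$ is drawn independently of $d$. $M_\Lambda(t)=\mathbb E[e^{t\Lambda}]$. *)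

theory Defs
  imports "HOL-Probability.Probability"
begin

text \<open>Standard normal distribution function, evaluated on extended reals
  (so that \<open>Phi \<infinity> = 1\<close> covers the case b = \<infinity>).\<close>
definition Phi :: "ereal \<Rightarrow> real" where
  "Phi x = measure (density lborel (\<lambda>y. ennreal (std_normal_density y))) {y. ereal y \<le> x}"

fun phi :: "ereal \<Rightarrow> real" where
  "phi (ereal x) = std_normal_density x"
| "phi _ = 0"

definition trunc_gauss_density :: "real \<Rightarrow> real \<Rightarrow> real \<Rightarrow> ereal \<Rightarrow> real \<Rightarrow> real" where
  "trunc_gauss_density mu sg a b x =
     (if a \<le> x \<and> ereal x \<le> b then
        std_normal_density ((x - mu) / sg) /
          (sg * (Phi ((b - ereal mu) / ereal sg) - Phi (ereal ((a - mu) / sg))))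
      else 0)"

definition trunc_gauss :: "real \<Rightarrow> real \<Rightarrow> real \<Rightarrow> ereal \<Rightarrow> real measure" where
  "trunc_gauss mu sg a b = density lborel (\<lambda>x. ennreal (trunc_gauss_density mu sg a b x))"

definition sensitivity :: "('d \<Rightarrow> 'd \<Rightarrow> bool) \<Rightarrow> ('d \<Rightarrow> real) \<Rightarrow> ereal" where
  "sensitivity adj q = Sup {ereal \<bar>q d - q d'\<bar> | d d'. adj d d'}"

definition differentially_private ::
  "('d \<Rightarrow> 'd \<Rightarrow> bool) \<Rightarrow> ('d \<Rightarrow> real measure) \<Rightarrow> real \<Rightarrow> bool" where
  "differentially_private adj M eps \<longleftrightarrow>
     (\<forall>d d'. adj d d' \<longrightarrow> (\<forall>S \<in> sets borel. measure (M d) S \<le> exp eps * measure (M d') S))"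

definition laplace_density :: "real \<Rightarrow> real \<Rightarrow> real" where
  "laplace_density l w = l / 2 * exp (- l * \<bar>w\<bar>)"

definition rand_laplace_mech :: "real measure \<Rightarrow> ('d \<Rightarrow> real) \<Rightarrow> 'd \<Rightarrow> real measure" where
  "rand_laplace_mech Lam q d =
     bind Lam (\<lambda>l. distr (density lborel (\<lambda>w. ennreal (laplace_density l w))) borel (\<lambda>w. q d + w))"

definition mgf :: "real measure \<Rightarrow> real \<Rightarrow> real" where
  "mgf Lam t = (\<integral>x. exp (t * x) \<partial>Lam)"

end

theory Submission
  imports Defs "HOL-Real_Asymp.Real_Asymp"
begin


lemma meas_P: "sets P = sets borel \<Longrightarrow> f \<in> borel_measurable borel \<Longrightarrow> f \<in> borel_measurable P"
  using measurable_cong_sets by blast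

lemma intG:
  fixes P :: "real measure"
  assumes sP: "sets P = sets borel" and "AE l in P. 0 \<le> l" and "integrable P (\<lambda>l. l)" and "0 \<le> s"
  shows "integrable P (\<lambda>l. l * exp (- s * l))"
proof (rule Bochner_Integration.integrable_bound[OF assms(3)])
  show "(\<lambda>l. l * exp (- s * l)) \<in> borel_measurable P" by (rule meas_P[OF sP]) simp
  show "AE x in P. norm (x * exp (- s * x)) \<le> norm x"
    using assms(2) 
  proof eventually_elim
    case (elim x)
    have "exp (- s * x) \<le> 1" using elim \<open>0 \<le> s\<close> by (simp add: mult_nonneg_nonneg)
    then show ?case using elim by (simp add: abs_mult mult_left_le)
  qed
qed

lemma cheb:
  fixes P :: "real measure"
  assumes sP: "sets P = sets borel" and nn: "AE l in P. 0 \<le> l" and int: "integrable P (\<lambda>l. l)"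
    and s: "0 < s" and D: "0 \<le> D" and G0: "0 < (\<integral>l. l * exp (- 0 * l) \<partial>P)"
  shows "(\<integral>l. l * exp (- s * l) \<partial>P) * (\<integral>l. l * exp (- D * l) \<partial>P)
     \<le> (\<integral>l. l * exp (- 0 * l) \<partial>P) * (\<integral>l. l * exp (- (s + D) * l) \<partial>P)"
proof -
  define G where "G = (\<lambda>s. \<integral>l. l * exp (- s * l) \<partial>P)"
  have iG: "integrable P (\<lambda>l. l * exp (- t * l))" if "0 \<le> t" for t
    using intG[OF sP nn int that] .
  define m where "m = G s / G 0"
  define c where "c = m powr (D / s)"
  have Gs: "0 \<le> G s" unfolding G_def
    by (rule integral_nonneg_AE) (use nn in \<open>auto\<close>)
  have m0: "0 \<le> m" unfolding m_def using Gs G0 G_def by simp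
  have pw: "AE l in P. 0 \<le> l * ((exp (- s * l) - m) * (exp (- D * l) - c))"
    using nn
  proof eventually_elim
    case (elim l)
    have e: "exp (- D * l) = exp (- s * l) powr (D / s)"
      using s by (simp add: powr_def)
    have "0 \<le> (exp (- s * l) - m) * (exp (- D * l) - c)"
    proof (cases "m \<le> exp (- s * l)")
      case True
      then have "c \<le> exp (- D * l)" unfolding e c_def
        using m0 D s by (intro powr_mono2) auto
      then show ?thesis using True by simp
    next
      case False
      then have "exp (- D * l) \<le> c" unfolding e c_def
        using m0 D s by (intro powr_mono2) auto
      then show ?thesis using False by (simp add: mult_nonpos_nonpos)
    qed
    then show ?case using elim by simp
  qed
  have expand: "(\<lambda>l. l * ((exp (- s * l) - m) * (exp (- D * l) - c))) =
    (\<lambda>l. l * exp (- (s + D) * l) - c * (l * exp (- s * l)) - m * (l * exp (- D * l)) + (m * c) * (l * exp (- 0 * l)))"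
    by (rule ext) (simp add: algebra_simps exp_add[symmetric])
  have "0 \<le> (\<integral>l. l * ((exp (- s * l) - m) * (exp (- D * l) - c)) \<partial>P)"
    by (rule integral_nonneg_AE[OF pw])
  also have "\<dots> = G (s + D) - c * G s - m * G D + (m * c) * G 0"
  proof -
    have i1: "integrable P (\<lambda>l. l * exp (- (s + D) * l))" using iG[of "s + D"] s D by simp
    have i2: "integrable P (\<lambda>l. l * exp (- s * l))" using iG s by simp
    have i3: "integrable P (\<lambda>l. l * exp (- D * l))" using iG D by simp
    have i4: "integrable P (\<lambda>l. l * exp (- 0 * l))" using int by simp
    show ?thesis unfolding expand G_def
      using i1 i2 i3 i4 by simp
  qed
  finally have "0 \<le> G (s + D) - c * G s - m * G D + (m * c) * G 0" .
  moreover have "m * G 0 = G s" unfolding m_def using G0 G_def by simp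
  ultimately have "m * G D \<le> G (s + D)" by (simp add: algebra_simps)
  then have "G s * G D \<le> G 0 * G (s + D)" unfolding m_def using G0 G_def
    by (simp add: field_simps)
  then show ?thesis unfolding G_def .
qed

lemma Gmono:
  fixes P :: "real measure"
  assumes sP: "sets P = sets borel" and nn: "AE l in P. 0 \<le> l" and int: "integrable P (\<lambda>l. l)"
    and "0 \<le> s" "s \<le> t"
  shows "(\<integral>l. l * exp (- t * l) \<partial>P) \<le> (\<integral>l. l * exp (- s * l) \<partial>P)"
proof (rule integral_mono_AE)
  show "integrable P (\<lambda>l. l * exp (- t * l))" using intG[OF sP nn int] assms by simp
  show "integrable P (\<lambda>l. l * exp (- s * l))" using intG[OF sP nn int] assms by simp
  show "AE x in P. x * exp (- t * x) \<le> x * exp (- s * x)" using nn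
    by eventually_elim (use assms in \<open>auto intro!: mult_left_mono mult_right_mono\<close>)
qed

lemma Gpos:
  fixes P :: "real measure"
  assumes pP: "prob_space P" and sP: "sets P = sets borel" and pos: "AE l in P. 0 < l" and int: "integrable P (\<lambda>l. l)"
    and "0 \<le> s"
  shows "0 < (\<integral>l. l * exp (- s * l) \<partial>P)"
proof -
  have nn: "AE l in P. 0 \<le> l" using pos by eventually_elim simp
  have i: "integrable P (\<lambda>l. l * exp (- s * l))" using intG[OF sP nn int] assms by simp
  have ge: "0 \<le> (\<integral>l. l * exp (- s * l) \<partial>P)"
    by (rule integral_nonneg_AE) (use nn in auto)
  have "(\<integral>l. l * exp (- s * l) \<partial>P) \<noteq> 0"
  proof
    assume "(\<integral>l. l * exp (- s * l) \<partial>P) = 0"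
    moreover have "AE l in P. 0 \<le> l * exp (- s * l)" using nn by eventually_elim simp
    ultimately have "AE l in P. l * exp (- s * l) = 0"
      using integral_nonneg_eq_0_iff_AE[OF i] by blast
    then have "AE l in P. False" using pos by eventually_elim auto
    then show False using prob_space.AE_False[OF pP] by simp
  qed
  then show ?thesis using ge by simp
qed

lemma keyG:
  fixes P :: "real measure"
  assumes pP: "prob_space P" and sP: "sets P = sets borel" and pos: "AE l in P. 0 < l" and int: "integrable P (\<lambda>l. l)"
    and D: "0 < D" and r: "0 \<le> r" and r': "0 \<le> r'" "r' \<le> r + D"
  shows "(\<integral>l. l * exp (- r * l) \<partial>P) * (\<integral>l. l * exp (- D * l) \<partial>P)
     \<le> (\<integral>l. l * exp (- 0 * l) \<partial>P) * (\<integral>l. l * exp (- r' * l) \<partial>P)"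
proof -
  define G where "G = (\<lambda>s. \<integral>l. l * exp (- s * l) \<partial>P)"
  have nn: "AE l in P. 0 \<le> l" using pos by eventually_elim simp
  have mono: "G t \<le> G s" if "0 \<le> s" "s \<le> t" for s t
    unfolding G_def using Gmono[OF sP nn int that] .
  have gp: "0 < G s" if "0 \<le> s" for s unfolding G_def using Gpos[OF pP sP pos int that] .
  show ?thesis
  proof (cases "r' \<le> D")
    case True
    have "G r * G D \<le> G 0 * G r'"
      by (rule mult_mono) (use mono[of 0 r] mono[of r' D] True r r' D gp[of D] gp[of 0] in auto)
    then show ?thesis unfolding G_def .
  next
    case False
    define s where "s = r' - D"
    have s0: "0 < s" "s \<le> r" using False r' unfolding s_def by auto
    have "G r * G D \<le> G s * G D"
      by (rule mult_right_mono) (use mono[of s r] s0 gp[of D] D in auto)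
    also have "\<dots> \<le> G 0 * G (s + D)"
      unfolding G_def by (rule cheb[OF sP nn int s0(1)]) (use D gp[of 0] in \<open>auto simp: G_def\<close>)
    also have "s + D = r'" unfolding s_def by simp
    finally show ?thesis unfolding G_def .
  qed
qed



lemma laplace_density_alt: "laplace_density l w = (l * exp (- \<bar>w\<bar> * l)) / 2"
  unfolding laplace_density_def by (simp add: mult.commute)

lemma laplace_meas[measurable]: "(\<lambda>w. laplace_density l w) \<in> borel_measurable borel"
  unfolding laplace_density_def by measurable

lemma laplace_total:
  assumes l: "0 < l"
  shows "(\<integral>\<^sup>+w. ennreal (laplace_density l w) \<partial>lborel) = 1"
proof -
  define E where "E = exponential_density l"
  have E1: "(\<integral>\<^sup>+w. ennreal (E w) \<partial>lborel) = 1"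
  proof -
    interpret prob_space "density lborel (exponential_density l)"
      using prob_space_exponential_density[OF l] .
    have "emeasure (density lborel (exponential_density l)) UNIV = 1"
      using emeasure_space_1 by simp
    then show ?thesis unfolding E_def by (subst (asm) emeasure_density) auto
  qed
  have E2: "(\<integral>\<^sup>+w. ennreal (E (- w)) \<partial>lborel) = 1"
    using nn_integral_real_affine[of "\<lambda>w. ennreal (E w)" "-1" 0] E1
    unfolding E_def by simp
  have ae: "AE w in lborel. ennreal (laplace_density l w) = ennreal (1/2) * (ennreal (E w) + ennreal (E (- w)))"
    using AE_lborel_singleton[of 0]
  proof eventually_elim
    case (elim w)
    have "laplace_density l w = 1/2 * (E w + E (- w))"
      using elim l unfolding laplace_density_def E_def exponential_density_def
      by (auto simp: abs_if mult.commute)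
    moreover have "0 \<le> E w" "0 \<le> E (- w)" using l unfolding E_def exponential_density_def by auto
    ultimately have "ennreal (laplace_density l w) = ennreal (1/2) * ennreal (E w + E (- w))"
      by (subst ennreal_mult[symmetric]) simp_all
    then show ?case using \<open>0 \<le> E w\<close> \<open>0 \<le> E (- w)\<close> by (simp add: ennreal_plus)
  qed
  have "(\<integral>\<^sup>+w. ennreal (laplace_density l w) \<partial>lborel) =
        (\<integral>\<^sup>+w. ennreal (1/2) * (ennreal (E w) + ennreal (E (- w))) \<partial>lborel)"
    by (rule nn_integral_cong_AE[OF ae])
  also have "\<dots> = ennreal (1/2) * ((\<integral>\<^sup>+w. ennreal (E w) \<partial>lborel) + (\<integral>\<^sup>+w. ennreal (E (- w)) \<partial>lborel))"
    unfolding E_def by (subst nn_integral_cmult) (auto simp: nn_integral_add)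
  also have "\<dots> = 1" unfolding E1 E2 
    by (metis ennreal_1 ennreal_numeral ennreal_plus[of 1 1] mult.commute nonzero_divide_eq_eq numeral_One one_add_one zero_less_numeral zero_le_one ennreal_mult'' order_less_imp_le zero_neq_numeral times_divide_eq_left)
  finally show ?thesis .
qed

lemma laplace_total_le: "(\<integral>\<^sup>+w. ennreal (laplace_density l w) \<partial>lborel) \<le> 1"
proof (cases "0 < l")
  case True then show ?thesis using laplace_total by simp
next
  case False
  then have "\<And>w. ennreal (laplace_density l w) = 0"
    unfolding laplace_density_def by (auto intro!: ennreal_neg mult_nonpos_nonneg)
  then show ?thesis by simp
qed

lemma kernel_emeasure:
  assumes S: "S \<in> sets borel"
  shows "emeasure (distr (density lborel (\<lambda>w. ennreal (laplace_density l w))) borel (\<lambda>w. c + w)) S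
     = (\<integral>\<^sup>+x. ennreal (laplace_density l (x - c)) * indicator S x \<partial>lborel)"
proof -
  have "emeasure (distr (density lborel (\<lambda>w. ennreal (laplace_density l w))) borel (\<lambda>w. c + w)) S
     = (\<integral>\<^sup>+w. ennreal (laplace_density l w) * indicator S (c + w) \<partial>lborel)"
  proof -
    have "(\<lambda>w. c + w) -` S \<inter> space borel \<in> sets borel" by (rule measurable_sets[OF _ S]) simp
    then have m: "(\<lambda>w. c + w) -` S \<in> sets lborel" by simp
    show ?thesis using S
      by (subst emeasure_distr) (auto simp: emeasure_density[OF _ m] indicator_def intro!: nn_integral_cong)
  qed
  also have "\<dots> = (\<integral>\<^sup>+x. ennreal (laplace_density l (x - c)) * indicator S x \<partial>lborel)"
    using nn_integral_real_affine[of "\<lambda>x. ennreal (laplace_density l (x - c)) * indicator S x" 1 c] S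
    by simp
  finally show ?thesis .
qed

lemma kernel_meas:
  assumes sP: "sets P = sets borel"
  shows "(\<lambda>l. distr (density lborel (\<lambda>w. ennreal (laplace_density l w))) borel (\<lambda>w. c + w))
     \<in> measurable P (subprob_algebra borel)"
proof (rule measurable_subprob_algebra)
  fix l
  show "subprob_space (distr (density lborel (\<lambda>w. ennreal (laplace_density l w))) borel (\<lambda>w. c + w))"
  proof
    show "emeasure (distr (density lborel (\<lambda>w. ennreal (laplace_density l w))) borel (\<lambda>w. c + w))
      (space (distr (density lborel (\<lambda>w. ennreal (laplace_density l w))) borel (\<lambda>w. c + w))) \<le> 1"
      using laplace_total_le[of l] by (subst emeasure_distr) (auto simp: emeasure_density)
  qed simp
  show "sets (distr (density lborel (\<lambda>w. ennreal (laplace_density l w))) borel (\<lambda>w. c + w)) = sets borel"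
    by simp
next
  fix A :: "real set" assume A: "A \<in> sets borel"
  have "(\<lambda>l. \<integral>\<^sup>+x. ennreal (laplace_density l (x - c)) * indicator A x \<partial>lborel) \<in> borel_measurable P"
  proof -
    interpret lborel: sigma_finite_measure lborel by (rule sigma_finite_lborel)
    have "(\<lambda>(l, x). ennreal (laplace_density l (x - c)) * indicator A x) \<in> borel_measurable (P \<Otimes>\<^sub>M lborel)"
      using A unfolding measurable_cong_sets[OF sets_pair_measure_cong[OF sP refl] refl]
      unfolding laplace_density_def by measurable
    then show ?thesis by (rule lborel.borel_measurable_nn_integral)
  qed
  then show "(\<lambda>l. emeasure (distr (density lborel (\<lambda>w. ennreal (laplace_density l w))) borel (\<lambda>w. c + w)) A) \<in> borel_measurable P"
    using kernel_emeasure[OF A] by simp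
qed



lemma mech_emeasure:
  fixes P :: "real measure"
  assumes pP: "prob_space P" and sP: "sets P = sets borel" and nn: "AE l in P. 0 \<le> l"
    and int: "integrable P (\<lambda>l. l)" and S: "S \<in> sets borel"
  shows "emeasure (rand_laplace_mech P q d) S =
    (\<integral>\<^sup>+x. (\<integral>\<^sup>+l. ennreal (laplace_density l (x - q d)) \<partial>P) * indicator S x \<partial>lborel)"
proof -
  interpret P: prob_space P by (rule pP)
  interpret pair_sigma_finite P lborel
    unfolding pair_sigma_finite_def
    using prob_space_imp_sigma_finite[OF pP] sigma_finite_lborel by simp
  define F where "F = (\<lambda>l x. ennreal (laplace_density l (x - q d)) * indicator S x)"
  have Fm: "(\<lambda>(l, x). F l x) \<in> borel_measurable (P \<Otimes>\<^sub>M lborel)"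
    using S unfolding measurable_cong_sets[OF sets_pair_measure_cong[OF sP refl] refl] F_def
    unfolding laplace_density_def by measurable
  have "emeasure (rand_laplace_mech P q d) S =
     (\<integral>\<^sup>+l. emeasure (distr (density lborel (\<lambda>w. ennreal (laplace_density l w))) borel (\<lambda>w. q d + w)) S \<partial>P)"
    unfolding rand_laplace_mech_def
    by (rule emeasure_bind[OF P.not_empty kernel_meas[OF sP] S])
  also have "\<dots> = (\<integral>\<^sup>+l. \<integral>\<^sup>+x. F l x \<partial>lborel \<partial>P)"
    by (simp add: kernel_emeasure[OF S] F_def)
  also have "\<dots> = (\<integral>\<^sup>+x. \<integral>\<^sup>+l. F l x \<partial>P \<partial>lborel)"
    by (rule Fubini'[OF Fm, symmetric])
  also have "\<dots> = (\<integral>\<^sup>+x. (\<integral>\<^sup>+l. ennreal (laplace_density l (x - q d)) \<partial>P) * indicator S x \<partial>lborel)"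
  proof (rule nn_integral_cong)
    fix x
    have m: "(\<lambda>l. ennreal (laplace_density l (x - q d))) \<in> borel_measurable P"
      by (rule meas_P[OF sP]) (unfold laplace_density_def, measurable)
    show "(\<integral>\<^sup>+l. F l x \<partial>P) = (\<integral>\<^sup>+l. ennreal (laplace_density l (x - q d)) \<partial>P) * indicator S x"
      unfolding F_def using m by (simp add: nn_integral_multc)
  qed
  finally show ?thesis .
qed

lemma H_eq:
  fixes P :: "real measure"
  assumes sP: "sets P = sets borel" and nn: "AE l in P. 0 \<le> l"
    and int: "integrable P (\<lambda>l. l)"
  shows "(\<integral>\<^sup>+l. ennreal (laplace_density l w) \<partial>P) = ennreal ((\<integral>l. l * exp (- \<bar>w\<bar> * l) \<partial>P) / 2)"
proof -
  have i: "integrable P (\<lambda>l. l * exp (- \<bar>w\<bar> * l) / 2)"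
    using intG[OF sP nn int, of "\<bar>w\<bar>"] by simp
  have "(\<integral>\<^sup>+l. ennreal (laplace_density l w) \<partial>P) = (\<integral>\<^sup>+l. ennreal (l * exp (- \<bar>w\<bar> * l) / 2) \<partial>P)"
    by (simp add: laplace_density_alt)
  also have "\<dots> = ennreal (\<integral>l. l * exp (- \<bar>w\<bar> * l) / 2 \<partial>P)"
    by (rule nn_integral_eq_integral[OF i]) (use nn in \<open>eventually_elim, simp\<close>)
  also have "\<dots> = ennreal ((\<integral>l. l * exp (- \<bar>w\<bar> * l) \<partial>P) / 2)" by simp
  finally show ?thesis .
qed

lemma abstract_DP:
  fixes P :: "real measure" and adj :: "'d \<Rightarrow> 'd \<Rightarrow> bool" and q :: "'d \<Rightarrow> real"
  assumes pP: "prob_space P" and sP: "sets P = sets borel" and pos: "AE l in P. 0 < l"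
    and int: "integrable P (\<lambda>l. l)" and D: "0 < D"
    and sens: "\<And>d d'. adj d d' \<Longrightarrow> \<bar>q d - q d'\<bar> \<le> D"
  shows "differentially_private adj (rand_laplace_mech P q)
     (ln ((\<integral>l. l \<partial>P) / (\<integral>l. l * exp (- D * l) \<partial>P)))"
  unfolding differentially_private_def
proof (intro allI impI ballI)
  fix d d' S assume adj: "adj d d'" and S: "S \<in> sets (borel :: real measure)"
  interpret P: prob_space P by (rule pP)
  have nn: "AE l in P. 0 \<le> l" using pos by eventually_elim simp
  define G where "G = (\<lambda>s. \<integral>l. l * exp (- s * l) \<partial>P)"
  have G0: "G 0 = (\<integral>l. l \<partial>P)" unfolding G_def by simp
  have gp: "0 < G s" if "0 \<le> s" for s unfolding G_def using Gpos[OF pP sP pos int that] .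
  define E where "E = G 0 / G D"
  have E0: "0 < E" unfolding E_def using gp[of 0] gp[of D] D by simp
  have eE: "exp (ln ((\<integral>l. l \<partial>P) / (\<integral>l. l * exp (- D * l) \<partial>P))) = E"
    using E0 unfolding E_def G0[symmetric] by (simp add: G_def)
  have Hm: "(\<lambda>x. (\<integral>\<^sup>+l. ennreal (laplace_density l (x - q d')) \<partial>P) * indicator S x) \<in> borel_measurable lborel"
  proof -
    have "(\<lambda>(x, l). ennreal (laplace_density l (x - q d'))) \<in> borel_measurable (lborel \<Otimes>\<^sub>M P)"
      unfolding measurable_cong_sets[OF sets_pair_measure_cong[OF refl sP] refl]
      unfolding laplace_density_def by measurable
    then have "(\<lambda>x. \<integral>\<^sup>+l. ennreal (laplace_density l (x - q d')) \<partial>P) \<in> borel_measurable lborel"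
      by (rule P.borel_measurable_nn_integral)
    then show ?thesis using S by measurable
  qed
  have pw: "(\<integral>\<^sup>+l. ennreal (laplace_density l (x - q d)) \<partial>P) * indicator S x
      \<le> ennreal E * ((\<integral>\<^sup>+l. ennreal (laplace_density l (x - q d')) \<partial>P) * indicator S x)" for x
  proof -
    have "\<bar>x - q d'\<bar> \<le> \<bar>x - q d\<bar> + D" using sens[OF adj] by linarith
    from keyG[OF pP sP pos int D abs_ge_zero abs_ge_zero this]
    have "G \<bar>x - q d\<bar> * G D \<le> G 0 * G \<bar>x - q d'\<bar>" unfolding G_def .
    then have "G \<bar>x - q d\<bar> \<le> E * G \<bar>x - q d'\<bar>"
      unfolding E_def using gp[of D] D by (simp add: field_simps)
    then have "G \<bar>x - q d\<bar> / 2 \<le> E * (G \<bar>x - q d'\<bar> / 2)" by simp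
    then have "ennreal (G \<bar>x - q d\<bar> / 2) \<le> ennreal E * ennreal (G \<bar>x - q d'\<bar> / 2)"
      using E0 gp[of "\<bar>x - q d'\<bar>"] by (subst ennreal_mult[symmetric]) (auto intro!: ennreal_leI)
    moreover have "(\<integral>\<^sup>+l. ennreal (laplace_density l (x - q d)) \<partial>P) = ennreal (G \<bar>x - q d\<bar> / 2)"
      unfolding G_def by (rule H_eq[OF sP nn int])
    moreover have "(\<integral>\<^sup>+l. ennreal (laplace_density l (x - q d')) \<partial>P) = ennreal (G \<bar>x - q d'\<bar> / 2)"
      unfolding G_def by (rule H_eq[OF sP nn int])
    ultimately show ?thesis
      by (cases "x \<in> S") (simp_all add: mult.assoc)
  qed
  have "emeasure (rand_laplace_mech P q d) S \<le> ennreal E * emeasure (rand_laplace_mech P q d') S"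
    unfolding mech_emeasure[OF pP sP nn int S]
    by (subst nn_integral_cmult[OF Hm, symmetric]) (rule nn_integral_mono, rule pw)
  moreover have fin: "emeasure (rand_laplace_mech P q d') S < top"
  proof -
    have "subprob_space (rand_laplace_mech P q d')"
      unfolding rand_laplace_mech_def
      by (rule subprob_space_bind[OF _ kernel_meas[OF sP]]) (rule P.subprob_space_axioms)
    then interpret M: subprob_space "rand_laplace_mech P q d'" .
    show ?thesis using M.subprob_emeasure_le_1[of S] by (simp add: order_le_less_trans)
  qed
  ultimately have "enn2real (emeasure (rand_laplace_mech P q d) S) \<le> enn2real (ennreal E * emeasure (rand_laplace_mech P q d') S)"
    using E0 by (intro enn2real_mono) (auto simp: ennreal_mult_less_top)
  then show "measure (rand_laplace_mech P q d) S \<le> exp (ln ((\<integral>l. l \<partial>P) / (\<integral>l. l * exp (- D * l) \<partial>P))) * measure (rand_laplace_mech P q d') S"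
    unfolding eE measure_def using E0 by (simp add: enn2real_mult)
qed



lemma beta_ereal: "0 < sg \<Longrightarrow> (ereal r - ereal mu) / ereal sg = ereal ((r - mu) / sg)"
  by simp

lemma beta_inf: "0 < sg \<Longrightarrow> (\<infinity> - ereal mu) / ereal sg = \<infinity>"
  by (simp add: ereal_divide_eq)

lemma beta_le:
  assumes sg: "0 < sg" and b: "b \<noteq> -\<infinity>"
  shows "ereal (mu + sg * u) \<le> b \<longleftrightarrow> ereal u \<le> (b - ereal mu) / ereal sg"
proof (cases b)
  case (real r)
  then show ?thesis using sg by (simp add: field_simps)
next
  case PInf
  then show ?thesis using sg by (simp add: beta_inf)
qed (use b in simp)

lemma normal_density_std: "0 < sg \<Longrightarrow> normal_density mu sg (mu + sg * u) = std_normal_density u / sg"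
  unfolding normal_density_def
  by (simp add: real_sqrt_mult power_mult_distrib field_simps)

lemma normal_density_std': "0 < sg \<Longrightarrow> std_normal_density ((x - mu) / sg) / sg = normal_density mu sg x"
  using normal_density_std[of sg mu "(x - mu) / sg"] by simp

definition IV :: "real \<Rightarrow> ereal \<Rightarrow> real set" where "IV a b = {x. a \<le> x \<and> ereal x \<le> b}"
definition IV0 :: "real \<Rightarrow> ereal \<Rightarrow> real set" where "IV0 a b = {x. a < x \<and> ereal x \<le> b}"

lemma IV_meas[measurable]: "IV a b \<in> sets borel"
proof (cases b)
  case (real r)
  then have "IV a b = {a..r}" unfolding IV_def by auto
  then show ?thesis by simp
next
  case PInf
  then have "IV a b = {a..}" unfolding IV_def by auto
  then show ?thesis by simp
next
  case MInf
  then have "IV a b = {}" unfolding IV_def by auto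
  then show ?thesis by simp
qed

lemma IV0_meas[measurable]: "IV0 a b \<in> sets borel"
proof (cases b)
  case (real r)
  then have "IV0 a b = {a<..r}" unfolding IV0_def by auto
  then show ?thesis by simp
next
  case PInf
  then have "IV0 a b = {a<..}" unfolding IV0_def by auto
  then show ?thesis by simp
next
  case MInf
  then have "IV0 a b = {}" unfolding IV0_def by auto
  then show ?thesis by simp
qed

lemma AE_ereal_neq: "AE x in lborel. ereal x \<noteq> (b::ereal)"
proof (cases b)
  case (real r)
  then show ?thesis using AE_lborel_singleton[of r] by simp
qed simp_all

lemma subst_int:
  fixes k :: "real \<Rightarrow> real"
  assumes sg: "0 < sg" and b: "b \<noteq> -\<infinity>" and k[measurable]: "k \<in> borel_measurable borel"
    and al: "al = (a - mu) / sg" and be: "be = (b - ereal mu) / ereal sg"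
  shows "(\<integral>x. indicator (IV a b) x * normal_density mu sg x * k x \<partial>lborel)
       = (\<integral>u. indicator (IV0 al be) u * std_normal_density u * k (mu + sg * u) \<partial>lborel)"
proof -
  have "(\<integral>x. indicator (IV a b) x * normal_density mu sg x * k x \<partial>lborel)
     = \<bar>sg\<bar> *\<^sub>R (\<integral>u. indicator (IV a b) (mu + sg * u) * normal_density mu sg (mu + sg * u) * k (mu + sg * u) \<partial>lborel)"
    using lborel_integral_real_affine(1)[where f="\<lambda>x. indicator (IV a b) x * normal_density mu sg x * k x" and c=sg and t=mu] sg
    by simp
  also have "(\<integral>u. indicator (IV a b) (mu + sg * u) * normal_density mu sg (mu + sg * u) * k (mu + sg * u) \<partial>lborel)
     = (\<integral>u. (indicator (IV0 al be) u * std_normal_density u * k (mu + sg * u)) / sg \<partial>lborel)"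
  proof (rule integral_cong_AE)
    show "AE u in lborel. indicator (IV a b) (mu + sg * u) * normal_density mu sg (mu + sg * u) * k (mu + sg * u)
       = (indicator (IV0 al be) u * std_normal_density u * k (mu + sg * u)) / sg"
      using AE_lborel_singleton[of "(a - mu) / sg"]
    proof eventually_elim
      case (elim u)
      have "a \<le> mu + sg * u \<longleftrightarrow> (a - mu) / sg < u" using elim sg
        by (auto simp: field_simps)
      then show ?case using beta_le[OF sg b, of mu u] normal_density_std[OF sg, of mu u]
        by (simp add: indicator_def IV_def IV0_def al be)
    qed
    show "(\<lambda>u. indicator (IV a b) (mu + sg * u) * normal_density mu sg (mu + sg * u) * k (mu + sg * u)) \<in> borel_measurable lborel" by measurable
    show "(\<lambda>u. (indicator (IV0 al be) u * std_normal_density u * k (mu + sg * u)) / sg) \<in> borel_measurable lborel" by measurable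
  qed
  also have "\<bar>sg\<bar> *\<^sub>R (\<integral>u. (indicator (IV0 al be) u * std_normal_density u * k (mu + sg * u)) / sg \<partial>lborel)
     = (\<integral>u. indicator (IV0 al be) u * std_normal_density u * k (mu + sg * u) \<partial>lborel)"
    using sg by simp
  finally show ?thesis .
qed

definition UV :: "ereal \<Rightarrow> real set" where "UV b = {x. ereal x \<le> b}"

lemma UV_meas[measurable]: "UV b \<in> sets borel"
proof (cases b)
  case (real r)
  then have "UV b = {..r}" unfolding UV_def by auto
  then show ?thesis by simp
next
  case PInf
  then have "UV b = UNIV" unfolding UV_def by auto
  then show ?thesis by simp
next
  case MInf
  then have "UV b = {}" unfolding UV_def by auto
  then show ?thesis by simp
qed

lemma measure_std_normal:
  assumes A[measurable]: "A \<in> sets borel"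
  shows "measure (density lborel (\<lambda>y. ennreal (std_normal_density y))) A = (\<integral>y. std_normal_density y * indicator A y \<partial>lborel)"
proof -
  have i: "integrable lborel (\<lambda>y. std_normal_density y * indicator A y)"
    using integrable_mult_indicator[of A lborel "std_normal_density"] integrable_normal_density[of 1 0] A
    by (simp add: mult.commute)
  have "emeasure (density lborel (\<lambda>y. ennreal (std_normal_density y))) A = (\<integral>\<^sup>+y. ennreal (std_normal_density y) * indicator A y \<partial>lborel)"
    by (rule emeasure_density) auto
  also have "\<dots> = (\<integral>\<^sup>+y. ennreal (std_normal_density y * indicator A y) \<partial>lborel)"
    by (rule nn_integral_cong) (simp add: indicator_def)
  also have "\<dots> = ennreal (\<integral>y. std_normal_density y * indicator A y \<partial>lborel)"
    by (rule nn_integral_eq_integral[OF i]) simp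
  finally show ?thesis unfolding measure_def by simp
qed

lemma Phi_UV: "Phi x = (\<integral>y. std_normal_density y * indicator (UV x) y \<partial>lborel)"
  unfolding Phi_def UV_def[symmetric] by (rule measure_std_normal) simp

lemma Z_eq:
  assumes ab: "ereal al < be"
  shows "(\<integral>u. indicator (IV0 al be) u * std_normal_density u \<partial>lborel) = Phi be - Phi (ereal al)"
proof -
  have iU: "integrable lborel (\<lambda>y. std_normal_density y * indicator (UV x) y)" for x
    using integrable_mult_indicator[of "UV x" lborel "std_normal_density"] integrable_normal_density[of 1 0]
    by (simp add: mult.commute)
  have "Phi be - Phi (ereal al) = (\<integral>y. std_normal_density y * indicator (UV be) y - std_normal_density y * indicator (UV (ereal al)) y \<partial>lborel)"
    unfolding Phi_UV by (rule Bochner_Integration.integral_diff[OF iU iU, symmetric])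
  also have "\<dots> = (\<integral>u. indicator (IV0 al be) u * std_normal_density u \<partial>lborel)"
  proof (rule Bochner_Integration.integral_cong[OF refl])
    fix y
    have "ereal y \<le> ereal al \<Longrightarrow> ereal y \<le> be" using ab by (meson less_imp_le order_trans)
    then show "std_normal_density y * indicator (UV be) y - std_normal_density y * indicator (UV (ereal al)) y
      = indicator (IV0 al be) y * std_normal_density y"
      unfolding UV_def IV0_def indicator_def by auto
  qed
  finally show ?thesis by simp
qed

lemma DERIV_std_normal: "DERIV std_normal_density u :> - u * std_normal_density u"
proof -
  have "DERIV (\<lambda>u. exp (- u\<^sup>2 / 2)) u :> exp (- u\<^sup>2 / 2) * (- u)"
    by (auto intro!: derivative_eq_intros)
  from DERIV_cmult[OF this, of "1 / sqrt (2 * pi)"]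
  show ?thesis unfolding std_normal_density_def by (simp add: algebra_simps)
qed

lemma tendsto_std_normal: "(std_normal_density \<longlongrightarrow> std_normal_density x) (at x)"
  using DERIV_isCont[OF DERIV_std_normal[of x]] unfolding isCont_def .

lemma tendsto_std_normal_top: "(std_normal_density \<longlongrightarrow> 0) at_top"
  unfolding std_normal_density_def by real_asymp

lemma mom1:
  assumes ab: "ereal al < be"
  shows "(\<integral>u. indicator (IV0 al be) u * (u * std_normal_density u) \<partial>lborel) = std_normal_density al - phi be"
proof -
  let ?f = "\<lambda>u. u * std_normal_density u"
  have i: "integrable lborel ?f"
    using integrable_std_normal_moment[of 1] by (simp add: mult.commute)
  have "(LBINT u=ereal al..be. ?f u) = (- phi be) - (- std_normal_density al)"
  proof (rule interval_integral_FTC_integrable[where F="\<lambda>u. - std_normal_density u"])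
    show "ereal al < be" by fact
    show "((\<lambda>u. - std_normal_density u) has_vector_derivative ?f x) (at x)" for x
      using DERIV_std_normal[of x]
      by (auto simp: has_real_derivative_iff_has_vector_derivative[symmetric] intro!: derivative_eq_intros)
    show "isCont ?f x" for x
      using tendsto_std_normal[of x] by (auto simp: isCont_def intro!: tendsto_intros)
    show "set_integrable lborel (einterval (ereal al) be) ?f"
      unfolding set_integrable_def
      by (rule integrable_mult_indicator[OF _ i]) simp
    show "(((\<lambda>u. - std_normal_density u) \<circ> real_of_ereal) \<longlongrightarrow> - std_normal_density al) (at_right (ereal al))"
      unfolding ereal_tendsto_simps1
      by (intro tendsto_minus tendsto_mono[OF at_le[OF subset_UNIV] tendsto_std_normal])
    show "(((\<lambda>u. - std_normal_density u) \<circ> real_of_ereal) \<longlongrightarrow> - phi be) (at_left be)"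
    proof (cases be)
      case (real r)
      then show ?thesis unfolding real ereal_tendsto_simps1 phi.simps
        by (intro tendsto_minus tendsto_mono[OF at_le[OF subset_UNIV] tendsto_std_normal])
    next
      case PInf
      have "phi \<infinity> = 0" using phi.simps(2) by (simp only: infinity_ereal_def)
      then show ?thesis unfolding PInf ereal_tendsto_simps1
        using tendsto_minus[OF tendsto_std_normal_top] by simp
    next
      case MInf
      then show ?thesis using ab by simp
    qed
  qed
  moreover have "(LBINT u=ereal al..be. ?f u) = (\<integral>u. indicator (einterval (ereal al) be) u * ?f u \<partial>lborel)"
    using ab unfolding interval_lebesgue_integral_def set_lebesgue_integral_def by simp
  moreover have "(\<integral>u. indicator (einterval (ereal al) be) u * ?f u \<partial>lborel) = (\<integral>u. indicator (IV0 al be) u * ?f u \<partial>lborel)"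
  proof (rule integral_cong_AE)
    show "AE u in lborel. indicator (einterval (ereal al) be) u * ?f u = indicator (IV0 al be) u * ?f u"
      using AE_ereal_neq[of be]
      by eventually_elim (auto simp: indicator_def IV0_def einterval_def)
  qed simp_all
  ultimately show ?thesis by simp
qed



locale tg =
  fixes mu sg a :: real and b :: ereal
  assumes sg: "0 < sg" and a0: "0 \<le> a" and ab: "ereal a < b"
begin

definition "al = (a - mu) / sg"
definition "be = (b - ereal mu) / ereal sg"
definition "Z = Phi be - Phi (ereal al)"
abbreviation "g \<equiv> trunc_gauss_density mu sg a b"
abbreviation "P \<equiv> trunc_gauss mu sg a b"

lemma bninf: "b \<noteq> -\<infinity>" using ab by auto

lemma al_be: "ereal al < be"
proof (cases b)
  case (real r)
  then show ?thesis using ab sg unfolding al_def be_def by (simp add: divide_strict_right_mono)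
next
  case PInf
  then show ?thesis using sg unfolding be_def by (simp add: beta_inf)
qed (use ab in simp)

lemma Z_int: "Z = (\<integral>u. indicator (IV0 al be) u * std_normal_density u \<partial>lborel)"
  unfolding Z_def using Z_eq[OF al_be] by simp

lemma Z_pos: "0 < Z"
proof -
  obtain c where c: "al < c" "ereal c < be" using al_be
    by (metis ereal_dense2 ereal_less(2) less_ereal.simps(1))
  have sub: "{al<..<c} \<subseteq> IV0 al be"
  proof
    fix x assume "x \<in> {al<..<c}"
    then have "al < x" "ereal x \<le> ereal c" by auto
    then show "x \<in> IV0 al be" using order_trans[OF \<open>ereal x \<le> ereal c\<close> less_imp_le[OF c(2)]] unfolding IV0_def by auto
  qed
  have i: "integrable lborel (\<lambda>u. indicator (IV0 al be) u * std_normal_density u)"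
    using integrable_mult_indicator[of "IV0 al be" lborel std_normal_density] by simp
  have nn: "AE u in lborel. 0 \<le> indicator (IV0 al be) u * std_normal_density u" by simp
  have ge: "0 \<le> Z" unfolding Z_int by (rule integral_nonneg_AE[OF nn])
  have "Z \<noteq> 0"
  proof
    assume "Z = 0"
    then have "AE u in lborel. indicator (IV0 al be) u * std_normal_density u = 0"
      using integral_nonneg_eq_0_iff_AE[OF i nn] unfolding Z_int by simp
    then have "AE u in lborel. u \<notin> {al<..<c}"
      by eventually_elim (use sub in \<open>auto simp: indicator_def normal_density_pos less_imp_neq[OF normal_density_pos, symmetric] split: if_splits\<close>)
    then have "emeasure lborel {al<..<c} = 0"
      by (subst (asm) AE_iff_measurable[of "{al<..<c}"]) auto
    then show False using c by simp
  qed
  then show ?thesis using ge by simp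
qed

lemma g_alt: "g x = indicator (IV a b) x * normal_density mu sg x / Z"
proof -
  have "std_normal_density ((x - mu) / sg) / (sg * Z) = normal_density mu sg x / Z"
    using normal_density_std'[OF sg, of x mu] by (simp add: divide_divide_eq_left[symmetric])
  then show ?thesis
    unfolding trunc_gauss_density_def Z_def[symmetric] al_def[symmetric] be_def[symmetric] IV_def
    unfolding al_def be_def by (auto simp: indicator_def)
qed

lemma g_meas[measurable]: "g \<in> borel_measurable borel"
  unfolding g_alt[abs_def] by measurable

lemma g_nonneg: "0 \<le> g x"
  unfolding g_alt using Z_pos by simp

lemma g_int:
  assumes k[measurable]: "k \<in> borel_measurable borel"
  shows "(\<integral>x. g x * k x \<partial>lborel) = (\<integral>u. indicator (IV0 al be) u * std_normal_density u * k (mu + sg * u) \<partial>lborel) / Z"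
proof -
  have "(\<integral>x. g x * k x \<partial>lborel) = (\<integral>x. indicator (IV a b) x * normal_density mu sg x * k x \<partial>lborel) / Z"
    unfolding g_alt by (simp add: field_simps)
  also have "\<dots> = (\<integral>u. indicator (IV0 al be) u * std_normal_density u * k (mu + sg * u) \<partial>lborel) / Z"
    using subst_int[OF sg bninf k al_def be_def] by simp
  finally show ?thesis .
qed

lemma g_total: "(\<integral>x. g x \<partial>lborel) = 1"
  using g_int[of "\<lambda>x. 1"] Z_pos unfolding Z_int by simp

lemma g_integrable: "integrable lborel g"
proof -
  have "integrable lborel (\<lambda>x. indicator (IV a b) x * normal_density mu sg x / Z)"
    using integrable_mult_indicator[of "IV a b" lborel "normal_density mu sg"] sg by (intro integrable_divide_zero) simp
  then show ?thesis unfolding g_alt .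
qed

lemma g_integrable_x: "integrable lborel (\<lambda>x. g x * x)"
proof -
  have "integrable lborel (\<lambda>x. indicator (IV a b) x * (normal_density mu sg x * x) / Z)"
    using integrable_mult_indicator[of "IV a b" lborel "\<lambda>x. normal_density mu sg x * x"]
      integrable_normal_moment_nz_1[OF sg] by (intro integrable_divide_zero) simp
  then show ?thesis unfolding g_alt by (simp add: mult.assoc)
qed

lemma sets_P: "sets P = sets borel"
  unfolding trunc_gauss_def by simp

lemma prob_P: "prob_space P"
proof
  have "emeasure P (space P) = (\<integral>\<^sup>+x. ennreal (g x) \<partial>lborel)"
    unfolding trunc_gauss_def by (subst emeasure_density) auto
  also have "\<dots> = ennreal (\<integral>x. g x \<partial>lborel)"
    by (rule nn_integral_eq_integral[OF g_integrable]) (simp add: g_nonneg)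
  finally show "emeasure P (space P) = 1" using g_total by simp
qed

lemma pos_P: "AE l in P. 0 < l"
proof -
  have "AE x in lborel. 0 < g x \<longrightarrow> 0 < x"
    using AE_lborel_singleton[of 0]
  proof eventually_elim
    case (elim x)
    show ?case
    proof
      assume "0 < g x"
      then have "a \<le> x" unfolding trunc_gauss_density_def by (auto split: if_splits)
      then show "0 < x" using a0 elim by simp
    qed
  qed
  then show ?thesis unfolding trunc_gauss_def by (subst AE_density) auto
qed

lemma int_P: "integrable P (\<lambda>l. l)"
  unfolding trunc_gauss_def
  by (subst integrable_density) (auto simp: g_nonneg g_integrable_x)

lemma mean_P: "(\<integral>l. l \<partial>P) = mu + sg * (phi (ereal al) - phi be) / Z"
proof -
  have i1: "integrable lborel (\<lambda>u. indicator (IV0 al be) u * std_normal_density u)"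
    using integrable_mult_indicator[of "IV0 al be" lborel std_normal_density] by simp
  have i2: "integrable lborel (\<lambda>u. indicator (IV0 al be) u * (u * std_normal_density u))"
    using integrable_mult_indicator[of "IV0 al be" lborel "\<lambda>u. u * std_normal_density u"]
      integrable_std_normal_moment[of 1] by (simp add: mult.commute)
  have "(\<integral>l. l \<partial>P) = (\<integral>x. g x * x \<partial>lborel)"
    unfolding trunc_gauss_def by (subst integral_density) (auto simp: g_nonneg)
  also have "\<dots> = (\<integral>u. indicator (IV0 al be) u * std_normal_density u * (mu + sg * u) \<partial>lborel) / Z"
    by (rule g_int) simp
  also have "(\<integral>u. indicator (IV0 al be) u * std_normal_density u * (mu + sg * u) \<partial>lborel)
      = (\<integral>u. mu * (indicator (IV0 al be) u * std_normal_density u) + sg * (indicator (IV0 al be) u * (u * std_normal_density u)) \<partial>lborel)"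
    by (rule Bochner_Integration.integral_cong) (auto simp: algebra_simps)
  also have "\<dots> = mu * Z + sg * (std_normal_density al - phi be)"
    using i1 i2 unfolding Z_int mom1[OF al_be, symmetric] by simp
  finally show ?thesis using Z_pos by (simp add: field_simps)
qed

end



lemma exp_taylor2: "\<bar>exp (u::real) - 1 - u\<bar> \<le> exp \<bar>u\<bar> * u\<^sup>2 / 2"
proof -
  obtain t where t: "\<bar>t\<bar> \<le> \<bar>u\<bar>" "exp u = (\<Sum>m<2. u ^ m / fact m) + exp t / fact 2 * u ^ 2"
    using Maclaurin_exp_le[of u 2] by blast
  have "exp u - 1 - u = exp t / 2 * u ^ 2" using t(2) by (simp add: numeral_2_eq_2)
  moreover have "exp t \<le> exp \<bar>u\<bar>" using t(1) by simp
  ultimately have "exp u - 1 - u \<le> exp \<bar>u\<bar> / 2 * u ^ 2"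
    by (auto intro!: mult_right_mono)
  moreover have "0 \<le> exp u - 1 - u" using exp_ge_add_one_self[of u] by linarith
  moreover have "exp \<bar>u\<bar> / 2 * u ^ 2 = exp \<bar>u\<bar> * u\<^sup>2 / 2" by simp
  ultimately show ?thesis by (simp only: abs_of_nonneg)
qed

lemma sq_exp_bound:
  fixes c x :: real
  assumes "0 < c" "0 \<le> x"
  shows "x\<^sup>2 * exp (- c * x) \<le> 4 / c\<^sup>2"
proof -
  have "c * x / 2 < exp (c * x / 2)" using exp_gt_self by blast
  then have "x \<le> 2 / c * exp (c * x / 2)" using assms by (simp add: field_simps)
  then have "x\<^sup>2 \<le> (2 / c * exp (c * x / 2))\<^sup>2" using assms by (intro power_mono) auto
  also have "\<dots> = 4 / c\<^sup>2 * exp (c * x)"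
    by (simp add: power2_eq_square field_simps exp_add[symmetric])
  finally have "x\<^sup>2 * exp (- c * x) \<le> 4 / c\<^sup>2 * exp (c * x) * exp (- c * x)"
    by (intro mult_right_mono) auto
  also have "\<dots> = 4 / c\<^sup>2" by (simp add: exp_minus field_simps)
  finally show ?thesis .
qed

lemma pw_bound:
  fixes c x h t0 :: real
  assumes c: "0 < c" and x: "0 \<le> x" and h: "\<bar>h\<bar> \<le> c" and t0: "t0 + c \<le> - c"
  shows "\<bar>exp ((t0 + h) * x) - exp (t0 * x) - h * (x * exp (t0 * x))\<bar> \<le> h\<^sup>2 * (2 / c\<^sup>2)"
proof -
  have "\<bar>exp ((t0 + h) * x) - exp (t0 * x) - h * (x * exp (t0 * x))\<bar> = exp (t0 * x) * \<bar>exp (h * x) - 1 - h * x\<bar>"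
  proof -
    have "exp ((t0 + h) * x) - exp (t0 * x) - h * (x * exp (t0 * x)) = exp (t0 * x) * (exp (h * x) - 1 - h * x)"
      by (simp add: algebra_simps exp_add)
    then show ?thesis by (simp add: abs_mult)
  qed
  also have "\<dots> \<le> exp (t0 * x) * (exp \<bar>h * x\<bar> * (h * x)\<^sup>2 / 2)"
    by (intro mult_left_mono exp_taylor2) simp
  also have "\<dots> = h\<^sup>2 / 2 * (x\<^sup>2 * exp ((t0 + \<bar>h\<bar>) * x))"
    using x by (simp add: abs_mult exp_add[symmetric] algebra_simps power_mult_distrib)
  also have "\<dots> \<le> h\<^sup>2 / 2 * (x\<^sup>2 * exp (- c * x))"
  proof -
    have "(t0 + \<bar>h\<bar>) * x \<le> - c * x" using x h t0 by (intro mult_right_mono) auto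
    then show ?thesis by (intro mult_left_mono) auto
  qed
  also have "\<dots> \<le> h\<^sup>2 / 2 * (4 / c\<^sup>2)"
    by (intro mult_left_mono sq_exp_bound c x) simp
  finally show ?thesis by (simp add: mult.commute)
qed

lemma mgf_deriv:
  fixes P :: "real measure"
  assumes pP: "prob_space P" and sP: "sets P = sets borel" and nn: "AE l in P. 0 \<le> l"
    and int: "integrable P (\<lambda>l. l)" and D: "0 < D"
  shows "(mgf P has_real_derivative (\<integral>l. l * exp (- D * l) \<partial>P)) (at (- D))"
proof -
  interpret P: prob_space P by (rule pP)
  define c where "c = D / 2"
  have c: "0 < c" "- D + c \<le> - c" using D unfolding c_def by auto
  define G where "G = (\<integral>l. l * exp (- D * l) \<partial>P)"
  have iE: "integrable P (\<lambda>l. exp (t * l))" if "t \<le> 0" for t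
  proof (rule Bochner_Integration.integrable_bound[OF P.integrable_const[of 1]])
    show "(\<lambda>l. exp (t * l)) \<in> borel_measurable P" by (rule meas_P[OF sP]) simp
    show "AE x in P. norm (exp (t * x)) \<le> norm (1::real)" using nn
      by eventually_elim (use that in \<open>simp add: mult_nonpos_nonneg\<close>)
  qed
  have iX: "integrable P (\<lambda>l. l * exp (- D * l))" using intG[OF sP nn int, of D] D by simp
  have key: "\<bar>mgf P (- D + h) - mgf P (- D) - h * G\<bar> \<le> h\<^sup>2 * (2 / c\<^sup>2)" if h: "\<bar>h\<bar> \<le> c" for h
  proof -
    have i1: "integrable P (\<lambda>l. exp ((- D + h) * l))" using iE[of "- D + h"] h c by simp
    have i2: "integrable P (\<lambda>l. exp ((- D) * l))" using iE[of "- D"] D by simp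
    have i3: "integrable P (\<lambda>l. h * (l * exp (- D * l)))" using iX by simp
    have eq: "mgf P (- D + h) - mgf P (- D) - h * G = (\<integral>l. exp ((- D + h) * l) - exp ((- D) * l) - h * (l * exp ((- D) * l)) \<partial>P)"
      unfolding mgf_def G_def using i1 i2 i3 by simp
    have i4: "integrable P (\<lambda>l. exp ((- D + h) * l) - exp ((- D) * l) - h * (l * exp ((- D) * l)))"
      using i1 i2 i3 by simp
    have "\<bar>mgf P (- D + h) - mgf P (- D) - h * G\<bar> \<le> (\<integral>l. \<bar>exp ((- D + h) * l) - exp ((- D) * l) - h * (l * exp ((- D) * l))\<bar> \<partial>P)"
      unfolding eq using integral_norm_bound[of P "\<lambda>l. exp ((- D + h) * l) - exp ((- D) * l) - h * (l * exp ((- D) * l))"]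
      by simp
    also have "\<dots> \<le> h\<^sup>2 * (2 / c\<^sup>2)"
    proof (rule P.integral_le_const)
      show "integrable P (\<lambda>l. \<bar>exp ((- D + h) * l) - exp ((- D) * l) - h * (l * exp ((- D) * l))\<bar>)"
        using i4 by simp
      show "AE l in P. \<bar>exp ((- D + h) * l) - exp ((- D) * l) - h * (l * exp ((- D) * l))\<bar> \<le> h\<^sup>2 * (2 / c\<^sup>2)"
        using nn by eventually_elim (rule pw_bound[OF c(1) _ h c(2)])
    qed
    finally show ?thesis .
  qed
  have "((\<lambda>h. (mgf P (- D + h) - mgf P (- D)) / h - G) \<longlongrightarrow> 0) (at 0)"
  proof (rule Lim_null_comparison)
    show "\<forall>\<^sub>F h in at 0. norm ((mgf P (- D + h) - mgf P (- D)) / h - G) \<le> \<bar>h\<bar> * (2 / c\<^sup>2)"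
      unfolding eventually_at
    proof (intro exI[of _ c] conjI ballI impI allI)
      show "0 < c" by (rule c)
      fix h :: real assume "h \<in> UNIV" and hh: "h \<noteq> 0 \<and> dist h 0 < c"
      then have hc: "\<bar>h\<bar> \<le> c" "h \<noteq> 0" by auto
      have "(mgf P (- D + h) - mgf P (- D)) / h - G = (mgf P (- D + h) - mgf P (- D) - h * G) / h"
        using hc by (simp add: field_simps)
      then have "norm ((mgf P (- D + h) - mgf P (- D)) / h - G) = \<bar>mgf P (- D + h) - mgf P (- D) - h * G\<bar> / \<bar>h\<bar>"
        by simp
      also have "\<dots> \<le> h\<^sup>2 * (2 / c\<^sup>2) / \<bar>h\<bar>"
        using key[OF hc(1)] by (intro divide_right_mono) auto
      also have "\<dots> = \<bar>h\<bar> * (2 / c\<^sup>2)"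
      proof -
        obtain y where y: "y = \<bar>h\<bar>" "0 < y" using hc by auto
        have "h\<^sup>2 = y * y" unfolding y(1) by (simp add: power2_eq_square)
        then have "h\<^sup>2 * (2 / c\<^sup>2) / y = y * (2 / c\<^sup>2)" using y(2) by simp
        then show ?thesis using y(1) by simp
      qed
      finally show "norm ((mgf P (- D + h) - mgf P (- D)) / h - G) \<le> \<bar>h\<bar> * (2 / c\<^sup>2)" .
    qed
    show "((\<lambda>h. \<bar>h\<bar> * (2 / c\<^sup>2)) \<longlongrightarrow> 0) (at 0)"
    proof -
      have "((\<lambda>h::real. \<bar>h\<bar>) \<longlongrightarrow> \<bar>0\<bar>) (at 0)" by (rule tendsto_rabs[OF tendsto_ident_at])
      from tendsto_mult[OF this tendsto_const[of "2 / c\<^sup>2"]] show ?thesis by simp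
    qed
  qed
  then have "((\<lambda>h. (mgf P (- D + h) - mgf P (- D)) / h) \<longlongrightarrow> G) (at 0)"
    by (simp add: LIM_zero_iff)
  then show ?thesis unfolding DERIV_def G_def .
qed



theorem mainTheorem13:
  fixes adj :: "'d \<Rightarrow> 'd \<Rightarrow> bool" and q :: "'d \<Rightarrow> real"
    and mu sg a :: real and b :: ereal and \<Delta> :: real
  assumes "symp adj"
    and "sensitivity adj q = ereal \<Delta>" and "0 < \<Delta>"
    and "0 < sg" and "0 \<le> a" and "ereal a < b"
  shows "differentially_private adj (rand_laplace_mech (trunc_gauss mu sg a b) q)
           (ln ((mu + sg * (phi (ereal ((a - mu) / sg)) - phi ((b - ereal mu) / ereal sg)) /
                   (Phi ((b - ereal mu) / ereal sg) - Phi (ereal ((a - mu) / sg))))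
                / deriv (mgf (trunc_gauss mu sg a b)) (- \<Delta>)))"
proof -
  interpret tg mu sg a b using assms(4-6) by unfold_locales
  have sens: "\<bar>q d - q d'\<bar> \<le> \<Delta>" if "adj d d'" for d d'
  proof -
    have "ereal \<bar>q d - q d'\<bar> \<le> sensitivity adj q"
      unfolding sensitivity_def using that by (intro Sup_upper) blast
    then show ?thesis using assms(2) by simp
  qed
  have nn: "AE l in P. 0 \<le> l" using pos_P by eventually_elim simp
  have dv: "deriv (mgf P) (- \<Delta>) = (\<integral>l. l * exp (- \<Delta> * l) \<partial>P)"
    by (rule DERIV_imp_deriv[OF mgf_deriv[OF prob_P sets_P nn int_P assms(3)]])
  have mn: "mu + sg * (phi (ereal ((a - mu) / sg)) - phi ((b - ereal mu) / ereal sg)) /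
                   (Phi ((b - ereal mu) / ereal sg) - Phi (ereal ((a - mu) / sg))) = (\<integral>l. l \<partial>P)"
    using mean_P unfolding al_def be_def Z_def by simp
  show ?thesis unfolding dv mn
    by (rule abstract_DP[OF prob_P sets_P pos_P int_P assms(3) sens])
qed

end
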